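(* Let $\theta>0$ and $\gamma:=\frac{\sqrt{2\theta}(1+i)}{2}$. If $S=\sum_{p=0}^\infty a_{p,p}\gamma^{-2p}x^py^p\in A^\infty(\mathbb{R}^2_\theta)$ satisfies $S^2=S=S^*$, then $S=0$ or $S=1$.
   Context: $A^\infty(\mathbb{R}^2_\theta)$ is the algebra of formal series $\sum_{p,q\geq 0}c_{p,q}x^py^q$ with complex coefficients of Schwartz class on $\mathbb{N}^2$ (for every $r\geq1$, $\sup_{p,q}(1+p^2+q^2)^r|c_{p,q}|<\infty$), where $x,y$ are self-adjoint with $yx=xy+i\theta$ (i.e. $[x,y]=-i\theta$); products are computed by reordering into the normal form $x^py^q$ via this relation, and $(c\,x^py^q)^*=\bar c\,y^qx^p$. *)

theory Defs
  imports Complex_Main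
begin

text \<open>Elements of the algebra A-infinity(R^2_theta) are represented by their
coefficient functions c, standing for the formal series sum of c p q x^p y^q
(normal order, x to the left of y).\<close>

definition schwartz :: "(nat \<Rightarrow> nat \<Rightarrow> complex) \<Rightarrow> bool" where
  "schwartz c \<longleftrightarrow>
     (\<forall>r::nat. r \<ge> 1 \<longrightarrow>
        (\<exists>B::real. \<forall>p q. (1 + real p ^ 2 + real q ^ 2) ^ r * norm (c p q) \<le> B))"

text \<open>Reordering coefficient: with yx = xy + i theta one has
  y^q x^r = sum_k k! (q choose k) (r choose k) (i theta)^k x^(r-k) y^(q-k).\<close>

definition reorder :: "real \<Rightarrow> nat \<Rightarrow> nat \<Rightarrow> nat \<Rightarrow> complex" where
  "reorder \<theta> q r k =
     of_nat (fact k * (q choose k) * (r choose k)) * (\<i> * complex_of_real \<theta>) ^ k"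

text \<open>The k-th contribution to the coefficient of x^m y^n in the product
  (sum c p q x^p y^q)(sum d r s x^r y^s): terms with p + r - k = m, q + s - k = n.\<close>

definition prod_term ::
  "real \<Rightarrow> (nat \<Rightarrow> nat \<Rightarrow> complex) \<Rightarrow> (nat \<Rightarrow> nat \<Rightarrow> complex) \<Rightarrow> nat \<Rightarrow> nat \<Rightarrow> nat \<Rightarrow> complex"
  where
  "prod_term \<theta> c d m n k =
     (\<Sum>p\<le>m. \<Sum>s\<le>n. c p (n - s + k) * d (m - p + k) s * reorder \<theta> (n - s + k) (m - p + k) k)"

definition is_product ::
  "real \<Rightarrow> (nat \<Rightarrow> nat \<Rightarrow> complex) \<Rightarrow> (nat \<Rightarrow> nat \<Rightarrow> complex) \<Rightarrow> (nat \<Rightarrow> nat \<Rightarrow> complex) \<Rightarrow> bool"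
  where
  "is_product \<theta> c d e \<longleftrightarrow> (\<forall>m n. (\<lambda>k. prod_term \<theta> c d m n k) sums e m n)"

text \<open>e is the adjoint of c: (c x^p y^q)^* = conj c y^q x^p, reordered.\<close>

definition is_adjoint ::
  "real \<Rightarrow> (nat \<Rightarrow> nat \<Rightarrow> complex) \<Rightarrow> (nat \<Rightarrow> nat \<Rightarrow> complex) \<Rightarrow> bool" where
  "is_adjoint \<theta> c e \<longleftrightarrow>
     (\<forall>m n. (\<lambda>k. cnj (c (m + k) (n + k)) * reorder \<theta> (n + k) (m + k) k) sums e m n)"

definition one_series :: "nat \<Rightarrow> nat \<Rightarrow> complex" where
  "one_series p q = (if p = 0 \<and> q = 0 then 1 else 0)"

end

theory Submission imports Defs begin

lemma ff_lemma:
  fixes N p j :: nat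
  assumes "p \<le> N"
  shows "(N choose (p+j)) * fact (p+j) = (N choose p) * fact p * ((N-p) choose j) * fact j"
proof (cases "p + j \<le> N")
  case True
  have a: "fact (p+j) * fact (N-(p+j)) * (N choose (p+j)) = (fact N :: nat)"
    using binomial_fact_lemma[OF True] .
  have b: "fact p * fact (N-p) * (N choose p) = (fact N :: nat)"
    using binomial_fact_lemma[OF assms] .
  have c: "fact j * fact (N-p-j) * ((N-p) choose j) = (fact (N-p) :: nat)"
    using binomial_fact_lemma[of j "N-p"] True by simp
  have "(N choose (p+j)) * fact (p+j) * fact (N-p-j) = (N choose p) * fact p * ((N-p) choose j) * fact j * fact (N-p-j)"
  proof -
    have "(N choose (p+j)) * fact (p+j) * fact (N-p-j) = (fact N :: nat)"
      using a by (simp add: algebra_simps)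
    also have "\<dots> = fact p * (N choose p) * (fact j * fact (N-p-j) * ((N-p) choose j))"
      using b c by (simp add: algebra_simps)
    finally show ?thesis by (simp add: algebra_simps)
  qed
  then show ?thesis by simp
next
  case False
  then have "N - p < j" "N < p + j" using assms by auto
  then show ?thesis by (simp add: binomial_eq_0)
qed

lemma comb_lemma:
  fixes N p s :: nat
  assumes "p \<le> N" "s \<le> N"
  shows "(\<Sum>n\<le>N. if n \<le> p + s then (N choose n) * fact n * fact (p+s-n) * (p choose (p+s-n)) * (s choose (p+s-n)) else 0)
         = (N choose p) * (N choose s) * fact p * fact s"
proof -
  define T where "T n = (if n \<le> p + s then (N choose n) * fact n * fact (p+s-n) * (p choose (p+s-n)) * (s choose (p+s-n)) else (0::nat))" for n
  define U where "U = {..N+p+s}"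
  have 1: "(\<Sum>n\<le>N. T n) = sum T U"
    unfolding U_def by (rule sum.mono_neutral_left) (auto simp: T_def)
  have 2: "(\<Sum>j\<le>s. T (p+j)) = sum T ((+) p ` {..s})"
    by (subst sum.reindex) (auto simp: inj_on_def)
  have 3: "sum T ((+) p ` {..s}) = sum T U"
  proof (rule sum.mono_neutral_left)
    show "finite U" by (simp add: U_def)
    show "(+) p ` {..s} \<subseteq> U" using assms by (auto simp: U_def)
    show "\<forall>i\<in>U - (+) p ` {..s}. T i = 0"
    proof
      fix i assume "i \<in> U - (+) p ` {..s}"
      then have A: "i \<notin> (+) p ` {..s}" by simp
      have "i < p \<or> i > p + s"
      proof (rule ccontr)
        assume "\<not> (i < p \<or> i > p + s)"
        then have "i = p + (i - p)" "i - p \<in> {..s}" by auto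
        then have "i \<in> (+) p ` {..s}" by (metis image_eqI)
        then show False using A by simp
      qed
      then show "T i = 0"
      proof
        assume "i < p" then have "s < p + s - i" by simp
        then show ?thesis by (simp add: T_def)
      qed (simp add: T_def)
    qed
  qed
  have 4: "T (p+j) = (N choose p) * fact p * fact s * (((N-p) choose j) * (p choose (s-j)))" if "j \<le> s" for j
  proof -
    have e: "p + s - (p + j) = s - j" by simp
    have f: "s choose (s-j) = s choose j" using binomial_symmetric[OF that] by simp
    have g: "fact j * fact (s-j) * (s choose j) = (fact s :: nat)" using binomial_fact_lemma[OF that] .
    have "T (p+j) = (N choose (p+j)) * fact (p+j) * fact (s-j) * (p choose (s-j)) * (s choose j)"
      using that by (simp add: T_def e f)
    also have "\<dots> = (N choose p) * fact p * ((N-p) choose j) * (fact j * fact (s-j) * (s choose j)) * (p choose (s-j))"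
      using ff_lemma[OF assms(1), of j] by (simp add: algebra_simps)
    also have "\<dots> = (N choose p) * fact p * fact s * (((N-p) choose j) * (p choose (s-j)))"
      using g by (simp add: algebra_simps)
    finally show ?thesis .
  qed
  have "(\<Sum>j\<le>s. T (p+j)) = (N choose p) * fact p * fact s * (\<Sum>j\<le>s. ((N-p) choose j) * (p choose (s-j)))"
    by (simp add: 4 sum_distrib_left)
  also have "(\<Sum>j\<le>s. ((N-p) choose j) * (p choose (s-j))) = N choose s"
    using vandermonde[where r=s and m="N-p" and n=p] assms by simp
  finally have "(\<Sum>j\<le>s. T (p+j)) = (N choose p) * fact p * fact s * (N choose s)" .
  then show ?thesis using 1 2 3 unfolding T_def[symmetric] by (simp add: algebra_simps)
qed


lemma restrict2:
  fixes H :: "nat \<Rightarrow> nat \<Rightarrow> complex"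
  assumes "n \<le> N" "\<And>p s. n < p \<or> n < s \<Longrightarrow> H p s = 0"
  shows "(\<Sum>p\<le>N. \<Sum>s\<le>N. H p s) = (\<Sum>p\<le>n. \<Sum>s\<le>n. H p s)"
proof -
  have "(\<Sum>p\<le>N. \<Sum>s\<le>N. H p s) = (\<Sum>p\<le>N. \<Sum>s\<le>n. H p s)"
  proof (rule sum.cong[OF refl])
    fix p assume "p \<in> {..N}"
    show "(\<Sum>s\<le>N. H p s) = (\<Sum>s\<le>n. H p s)"
      by (rule sum.mono_neutral_right) (use assms in auto)
  qed
  also have "\<dots> = (\<Sum>p\<le>n. \<Sum>s\<le>n. H p s)"
    by (rule sum.mono_neutral_right) (use assms in \<open>auto intro!: sum.neutral\<close>)
  finally show ?thesis .
qed

lemma topdeg: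
  fixes \<sigma> :: "nat \<Rightarrow> complex" and r :: "nat \<Rightarrow> nat \<Rightarrow> nat \<Rightarrow> complex"
  assumes E: "\<And>n. \<sigma> n = (\<Sum>p\<le>n. \<Sum>s\<le>n. if n \<le> p+s then \<sigma> p * \<sigma> s * r p s (p+s-n) else 0)"
    and r0: "\<And>m. r m m 0 = 1"
  shows "(\<forall>k\<ge>K. \<sigma> k = 0) \<Longrightarrow> (\<forall>k\<ge>1. \<sigma> k = 0)"
proof (induction K)
  case 0 then show ?case by simp
next
  case (Suc m)
  show ?case
  proof (cases "m = 0")
    case True then show ?thesis using Suc.prems by simp
  next
    case False
    have z: "\<sigma> k = 0" if "k > m" for k using Suc.prems that by simp
    have "\<sigma> (2*m) = 0" using z False by simp
    moreover have "\<sigma> (2*m) = (\<Sum>p\<le>2*m. \<Sum>s\<le>2*m. if p = m then (if s = m then \<sigma> m * \<sigma> m else 0) else 0)"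
    proof -
      have "\<sigma> (2*m) = (\<Sum>p\<le>2*m. \<Sum>s\<le>2*m. if 2*m \<le> p+s then \<sigma> p * \<sigma> s * r p s (p+s-2*m) else 0)"
        by (rule E)
      also have "\<dots> = (\<Sum>p\<le>2*m. \<Sum>s\<le>2*m. if p = m then (if s = m then \<sigma> m * \<sigma> m else 0) else 0)"
      proof (intro sum.cong refl)
        fix p s
        show "(if 2*m \<le> p+s then \<sigma> p * \<sigma> s * r p s (p+s-2*m) else 0) = (if p = m then (if s = m then \<sigma> m * \<sigma> m else 0) else 0)"
        proof (cases "p > m \<or> s > m")
          case True then show ?thesis using z by auto
        next
          case False
          then show ?thesis using r0 by auto
        qed
      qed
      finally show ?thesis .
    qed
    moreover have "(\<Sum>p\<le>2*m. \<Sum>s\<le>2*m. if p = m then (if s = m then \<sigma> m * \<sigma> m else 0) else (0::complex)) = \<sigma> m * \<sigma> m"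
    proof -
      have "(\<Sum>s\<le>2*m. if p = m then (if s = m then \<sigma> m * \<sigma> m else 0) else (0::complex)) = (if p = m then \<sigma> m * \<sigma> m else 0)" for p
        by (cases "p = m") (auto simp: sum.delta)
      then show ?thesis by (simp add: sum.delta)
    qed
    ultimately have "\<sigma> m * \<sigma> m = 0" by simp
    then have "\<sigma> m = 0" by simp
    then have "\<forall>k\<ge>m. \<sigma> k = 0" using z by (metis le_neq_implies_less)
    then show ?thesis by (rule Suc.IH)
  qed
qed

theorem proposition3p2:
  fixes \<theta> :: real and \<gamma> :: complex and a :: "nat \<Rightarrow> complex"
    and S :: "nat \<Rightarrow> nat \<Rightarrow> complex"
  assumes "\<theta> > 0"
    and "\<gamma> = complex_of_real (sqrt (2 * \<theta>)) * (1 + \<i>) / 2"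
    and "\<And>p q. S p q = (if p = q then a p * inverse (\<gamma> ^ (2 * p)) else 0)"
    and "schwartz S"
    and "is_product \<theta> S S S"
    and "is_adjoint \<theta> S S"
  shows "S = (\<lambda>p q. 0) \<or> S = one_series"
proof -
  define c where "c = \<i> * complex_of_real \<theta>"
  have c0: "c \<noteq> 0" using assms(1) by (simp add: c_def)
  have nc: "norm c = \<theta>" using assms(1) by (simp add: c_def norm_mult)
  define \<sigma> where "\<sigma> p = S p p" for p
  have Sd: "S p q = (if p = q then \<sigma> p else 0)" for p q
    using assms(3)[of p q] by (cases "p = q") (simp_all add: \<sigma>_def)
  have reo: "reorder \<theta> p s k = of_nat (fact k * (p choose k) * (s choose k)) * c^k" for p s k
    by (simp add: reorder_def c_def)
  have PT: "prod_term \<theta> S S n n k = (\<Sum>p\<le>n. \<Sum>s\<le>n. if p+s = n+k then \<sigma> p * \<sigma> s * reorder \<theta> p s k else 0)" for n k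
    unfolding prod_term_def
  proof (intro sum.cong refl)
    fix p s assume "p \<in> {..n}" "s \<in> {..n}"
    then have ps: "p \<le> n" "s \<le> n" by auto
    show "S p (n - s + k) * S (n - p + k) s * reorder \<theta> (n - s + k) (n - p + k) k =
          (if p + s = n + k then \<sigma> p * \<sigma> s * reorder \<theta> p s k else 0)"
    proof (cases "p + s = n + k")
      case True
      then have "n - s + k = p" "n - p + k = s" using ps by auto
      then show ?thesis using True by (simp add: Sd)
    next
      case False
      then have "p \<noteq> n - s + k" using ps by auto
      then show ?thesis using False by (simp add: Sd)
    qed
  qed
  have E: "\<sigma> n = (\<Sum>p\<le>n. \<Sum>s\<le>n. if n \<le> p+s then \<sigma> p * \<sigma> s * reorder \<theta> p s (p+s-n) else 0)" for n
  proof -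
    have s1: "(\<lambda>k. prod_term \<theta> S S n n k) sums \<sigma> n"
      using assms(5) by (simp add: is_product_def \<sigma>_def)
    have s2: "(\<lambda>k. prod_term \<theta> S S n n k) sums (\<Sum>k\<le>n. prod_term \<theta> S S n n k)"
    proof (rule sums_finite)
      fix k assume "k \<notin> {..n}"
      then have "n < k" by simp
      then show "prod_term \<theta> S S n n k = 0" unfolding PT
        by (intro sum.neutral ballI) auto
    qed simp
    have "\<sigma> n = (\<Sum>k\<le>n. prod_term \<theta> S S n n k)" using s1 s2 sums_unique2 by blast
    also have "\<dots> = (\<Sum>k\<le>n. \<Sum>p\<le>n. \<Sum>s\<le>n. if p+s = n+k then \<sigma> p * \<sigma> s * reorder \<theta> p s k else 0)"
      by (simp add: PT)
    also have "\<dots> = (\<Sum>p\<le>n. \<Sum>s\<le>n. \<Sum>k\<le>n. if p+s = n+k then \<sigma> p * \<sigma> s * reorder \<theta> p s k else 0)"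
      by (subst sum.swap, rule sum.cong[OF refl], rule sum.swap)
    also have "\<dots> = (\<Sum>p\<le>n. \<Sum>s\<le>n. if n \<le> p+s then \<sigma> p * \<sigma> s * reorder \<theta> p s (p+s-n) else 0)"
    proof (intro sum.cong refl)
      fix p s assume "p \<in> {..n}" "s \<in> {..n}"
      then have ps: "p \<le> n" "s \<le> n" by auto
      show "(\<Sum>k\<le>n. if p+s = n+k then \<sigma> p * \<sigma> s * reorder \<theta> p s k else 0) =
            (if n \<le> p+s then \<sigma> p * \<sigma> s * reorder \<theta> p s (p+s-n) else 0)"
      proof (cases "n \<le> p + s")
        case True
        have "(\<Sum>k\<le>n. if p+s = n+k then \<sigma> p * \<sigma> s * reorder \<theta> p s k else 0) =
              (\<Sum>k\<le>n. if k = p+s-n then \<sigma> p * \<sigma> s * reorder \<theta> p s k else 0)"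
          using True by (intro sum.cong refl) auto
        also have "\<dots> = \<sigma> p * \<sigma> s * reorder \<theta> p s (p+s-n)"
          using ps by (subst sum.delta) auto
        finally show ?thesis using True by simp
      next
        case False
        then show ?thesis by (intro trans[OF sum.neutral]) auto
      qed
    qed
    finally show ?thesis .
  qed
  define b where "b n = \<sigma> n * c^n * of_nat (fact n)" for n
  define f where "f N = (\<Sum>n\<le>N. of_nat (N choose n) * b n)" for N
  have fsq: "f N * f N = f N" for N
  proof -
    define H where "H n p s = (if n \<le> p+s then \<sigma> p * \<sigma> s * c^(p+s) *
        of_nat ((N choose n) * fact n * fact (p+s-n) * (p choose (p+s-n)) * (s choose (p+s-n))) else 0)" for n p s
    have "f N * f N = (\<Sum>p\<le>N. \<Sum>s\<le>N. of_nat (N choose p) * b p * (of_nat (N choose s) * b s))"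
      unfolding f_def by (rule sum_product)
    also have "\<dots> = (\<Sum>p\<le>N. \<Sum>s\<le>N. \<sigma> p * \<sigma> s * c^(p+s) * of_nat ((N choose p) * (N choose s) * fact p * fact s))"
      by (intro sum.cong refl) (simp add: b_def power_add algebra_simps)
    also have "\<dots> = (\<Sum>p\<le>N. \<Sum>s\<le>N. \<Sum>n\<le>N. H n p s)"
    proof (intro sum.cong refl)
      fix p s assume "p \<in> {..N}" "s \<in> {..N}"
      then have ps: "p \<le> N" "s \<le> N" by auto
      have "\<sigma> p * \<sigma> s * c^(p+s) * of_nat ((N choose p) * (N choose s) * fact p * fact s)
          = \<sigma> p * \<sigma> s * c^(p+s) * of_nat (\<Sum>n\<le>N. if n \<le> p + s then (N choose n) * fact n * fact (p+s-n) * (p choose (p+s-n)) * (s choose (p+s-n)) else 0)"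
        by (simp only: comb_lemma[OF ps])
      also have "\<dots> = (\<Sum>n\<le>N. H n p s)"
        unfolding of_nat_sum sum_distrib_left H_def by (intro sum.cong refl) auto
      finally show "\<sigma> p * \<sigma> s * c^(p+s) * of_nat ((N choose p) * (N choose s) * fact p * fact s) = (\<Sum>n\<le>N. H n p s)" .
    qed
    also have "\<dots> = (\<Sum>n\<le>N. \<Sum>p\<le>N. \<Sum>s\<le>N. H n p s)"
      by (rule trans[OF sum.cong[OF refl sum.swap] sum.swap])
    also have "\<dots> = (\<Sum>n\<le>N. \<Sum>p\<le>n. \<Sum>s\<le>n. H n p s)"
    proof (rule sum.cong[OF refl])
      fix n assume n: "n \<in> {..N}"
      show "(\<Sum>p\<le>N. \<Sum>s\<le>N. H n p s) = (\<Sum>p\<le>n. \<Sum>s\<le>n. H n p s)"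
      proof (rule restrict2)
        show "n \<le> N" using n by simp
        fix p s assume "n < p \<or> n < s"
        then have "s choose (p+s-n) = 0 \<or> p choose (p+s-n) = 0 \<or> \<not> n \<le> p + s"
        proof
          assume "n < p"
          then have "s < p+s-n \<or> \<not> n \<le> p + s" by linarith
          then show ?thesis by (auto simp: binomial_eq_0)
        next
          assume "n < s"
          then have "p < p+s-n \<or> \<not> n \<le> p + s" by linarith
          then show ?thesis by (auto simp: binomial_eq_0)
        qed
        then show "H n p s = 0" unfolding H_def by auto
      qed
    qed
    also have "\<dots> = (\<Sum>n\<le>N. of_nat (N choose n) * b n)"
    proof (intro sum.cong refl)
      fix n assume "n \<in> {..N}"
      have "of_nat (N choose n) * b n = of_nat (N choose n) * c^n * of_nat (fact n) * \<sigma> n"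
        by (simp add: b_def algebra_simps)
      also have "\<dots> = of_nat (N choose n) * c^n * of_nat (fact n) *
          (\<Sum>p\<le>n. \<Sum>s\<le>n. if n \<le> p+s then \<sigma> p * \<sigma> s * reorder \<theta> p s (p+s-n) else 0)"
        using E[of n] by simp
      also have "\<dots> = (\<Sum>p\<le>n. \<Sum>s\<le>n. H n p s)"
        unfolding sum_distrib_left
      proof (intro sum.cong refl)
        fix p s
        show "of_nat (N choose n) * c ^ n * of_nat (fact n) *
           (if n \<le> p + s then \<sigma> p * \<sigma> s * reorder \<theta> p s (p + s - n) else 0) = H n p s"
        proof (cases "n \<le> p + s")
          case True
          then have cc: "c^(p+s) = c^n * c^(p+s-n)" by (simp add: power_add[symmetric])
          show ?thesis using True unfolding H_def reo cc of_nat_mult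
            by (simp add: mult_ac)
        next
          case False then show ?thesis by (simp add: H_def)
        qed
      qed
      finally show "(\<Sum>p\<le>n. \<Sum>s\<le>n. H n p s) = of_nat (N choose n) * b n" by simp
    qed
    finally show ?thesis unfolding f_def by simp
  qed
  have f01: "f N \<in> \<int>" for N
  proof -
    from fsq[of N] have "f N * (f N - 1) = 0" by (simp add: algebra_simps)
    then have "f N = 0 \<or> f N = 1" by simp
    then show ?thesis by auto
  qed
  have bint: "b n \<in> \<int>" for n
  proof (induction n rule: less_induct)
    case (less n)
    have "{..n} = insert n {..<n}" by auto
    then have "f n = b n + (\<Sum>p<n. of_nat (n choose p) * b p)"
      unfolding f_def by simp
    then have "b n = f n - (\<Sum>p<n. of_nat (n choose p) * b p)" by simp
    moreover have "(\<Sum>p<n. of_nat (n choose p) * b p) \<in> \<int>"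
      using less by (intro Ints_sum Ints_mult) auto
    ultimately show ?case using f01[of n] by simp
  qed
  have adj: "(\<lambda>k. cnj (\<sigma> k) * reorder \<theta> k k k) sums \<sigma> 0"
  proof -
    from assms(6) have "(\<lambda>k. cnj (S (0+k) (0+k)) * reorder \<theta> (0+k) (0+k) k) sums S 0 0"
      unfolding is_adjoint_def by blast
    then show ?thesis by (simp add: \<sigma>_def)
  qed
  then have "(\<lambda>k. cnj (\<sigma> k) * reorder \<theta> k k k) \<longlonglongrightarrow> 0"
    using summable_LIMSEQ_zero sums_summable by blast
  then have "(\<lambda>k. norm (cnj (\<sigma> k) * reorder \<theta> k k k)) \<longlonglongrightarrow> 0"
    using tendsto_norm_zero by blast
  moreover have "norm (cnj (\<sigma> k) * reorder \<theta> k k k) = norm (b k)" for k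
    by (simp add: reo b_def norm_mult norm_power)
  ultimately have "(\<lambda>k. norm (b k)) \<longlonglongrightarrow> 0" by simp
  then have "eventually (\<lambda>k. norm (b k) < 1) sequentially"
    by (rule order_tendstoD) simp
  then obtain K where K: "\<And>k. k \<ge> K \<Longrightarrow> norm (b k) < 1"
    by (auto simp: eventually_sequentially)
  have "\<forall>k\<ge>K. \<sigma> k = 0"
  proof (intro allI impI)
    fix k assume "k \<ge> K"
    from bint[of k] obtain m where m: "b k = of_int m" by (auto elim: Ints_cases)
    have "norm (b k) < 1" using K \<open>k \<ge> K\<close> by simp
    then have "\<bar>m\<bar> < 1" using m by simp
    then have "b k = 0" using m by simp
    then show "\<sigma> k = 0" using c0 by (simp add: b_def)
  qed
  then have hi: "\<forall>k\<ge>1. \<sigma> k = 0"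
  proof -
    have r0: "\<And>m. reorder \<theta> m m 0 = 1" by (simp add: reorder_def)
    show ?thesis using topdeg[OF E r0] \<open>\<forall>k\<ge>K. \<sigma> k = 0\<close> by blast
  qed
  have "\<sigma> 0 = \<sigma> 0 * \<sigma> 0" using E[of 0] by (simp add: reorder_def)
  then have "\<sigma> 0 = 0 \<or> \<sigma> 0 = 1" by (metis mult_cancel_left1 mult_zero_left)
  then show ?thesis
  proof
    assume h: "\<sigma> 0 = 0"
    have "S = (\<lambda>p q. 0)"
    proof (intro ext)
      fix p q show "S p q = 0" using hi h by (cases p) (auto simp: Sd)
    qed
    then show ?thesis by simp
  next
    assume h: "\<sigma> 0 = 1"
    have "S = one_series"
    proof (intro ext)
      fix p q show "S p q = one_series p q" using hi h by (cases p) (auto simp: Sd one_series_def)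
    qed
    then show ?thesis by simp
  qed
qed

end
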